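(* The following equalities hold: \[ \hat R^+=R^+,\qquad \hat S^+=S^+,\qquad \hat R^-=R^-,\qquad \hat S^-=S^- . \]
   Context: $G$ is an unbounded multiply connected region of connectivity $m$ with $\infty\in G$ and $0\in G$. Its boundary is $\Gamma=\Gamma_1\cup\dots\cup\Gamma_m$, consisting of simple, non-intersecting, smooth, clockwise oriented closed curves. $G^-:=(\mathbb C\cup\{\infty\})\setminus(G\cup\Gamma)$ is the union of the bounded simply connected regions $G_k$ enclosed by $\Gamma_k$. Each $\Gamma_k$ is parametrized by a $2\pi$-periodic, twice continuously differentiable function $\eta_k$ with $\dot\eta_k\ne0$. $J$ is the disjoint union of $J_k=[0,2\pi]$, and $\eta=\eta_k$ on $J_k$. $H$ is the space of real functions on $J$ that are Hölder continuous and $2\pi$-periodic on each $J_k$. Functions on boundaries are identified with functions on $J$ via the parametrization. $A$ is a nonvanishing complex function on $\Gamma$ with continuously differentiable parametric form on $J$. Fix $z_0\in G_m$ and let $\Psi(z)=1/(z-z_0)$, $\hat G=\Psi(G)$ (bounded), $\hat G^-=\Psi(G^-)$ (unbounded), $\hat\Gamma=\Psi(\Gamma)$ with parametrization $\zeta(s)=1/(\eta(s)-z_0)$, and $\hat A(s)=\zeta(s)A(s)$. Analytic functions are continuous up to the boundary; boundary values are taken from the indicated region. The spaces are defined as follows: \[ \begin{aligned} R^+&=\{\gamma\in H:\gamma=\operatorname{Re}[Af^+],\ f \text{ analytic in } G,\ f(\infty)=0\},\\ S^+&=\{\gamma\in H:\gamma=Af^+,\ f \text{ analytic in } G,\ f(\infty)=0\},\\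 R^-&=\{\gamma\in H:\gamma=\operatorname{Re}[Ag^-],\ g \text{ analytic in } G^-\},\\ S^-&=\{\gamma\in H:\gamma=Ag^-,\ g \text{ analytic in } G^-\},\\ \hat R^+&=\{\gamma\in H:\gamma=\operatorname{Re}[\hat A\hat f^+],\ \hat f \text{ analytic in } \hat G\},\\ \hat S^+&=\{\gamma\in H:\gamma=\hat A\hat f^+,\ \hat f \text{ analytic in } \hat G\},\\ \hat R^-&=\{\gamma\in H:\gamma=\operatorname{Re}[\hat A\hat g^-],\ \hat g \text{ analytic in } \hat G^-,\ \hat g(\infty)=0\},\\ \hat S^-&=\{\gamma\in H:\gamma=\hat A\hat g^-,\ \hat g \text{ analytic in } \hat G^-,\ \hat g(\infty)=0\}. \end{aligned} \] In the definitions of the $S$-spaces, the function $Af^+$ (resp. $Ag^-$, $\hat A\hat f^+$, $\hat A\hat g^-$) is required to be real. *)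

theory Defs
  imports "HOL-Complex_Analysis.Complex_Analysis"
begin

text \<open>Functions on J = disjoint union of J_k = [0,2pi], k = 1..m, are modelled as
  functions of type nat => real => _ (first argument = index k, second = parameter s).\<close>

definition holder_cont :: "(real \<Rightarrow> real) \<Rightarrow> bool" where
  "holder_cont u \<longleftrightarrow> (\<exists>\<alpha> C. 0 < \<alpha> \<and> \<alpha> \<le> 1 \<and>
      (\<forall>s\<in>{0..2*pi}. \<forall>t\<in>{0..2*pi}. \<bar>u s - u t\<bar> \<le> C * \<bar>s - t\<bar> powr \<alpha>))"

definition Hsp :: "nat \<Rightarrow> (nat \<Rightarrow> real \<Rightarrow> real) set" where
  "Hsp m = {\<gamma>. \<forall>k\<in>{1..m}. holder_cont (\<gamma> k) \<and> (\<forall>s. \<gamma> k (s + 2*pi) = \<gamma> k s)}"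

definition Gam_k :: "(nat \<Rightarrow> real \<Rightarrow> complex) \<Rightarrow> nat \<Rightarrow> complex set" where
  "Gam_k \<eta> k = \<eta> k ` {0..2*pi}"

definition Gam :: "nat \<Rightarrow> (nat \<Rightarrow> real \<Rightarrow> complex) \<Rightarrow> complex set" where
  "Gam m \<eta> = (\<Union>k\<in>{1..m}. Gam_k \<eta> k)"

definition Gminus :: "nat \<Rightarrow> (nat \<Rightarrow> real \<Rightarrow> complex) \<Rightarrow> complex set" where
  "Gminus m \<eta> = (\<Union>k\<in>{1..m}. inside (Gam_k \<eta> k))"

definition Psi :: "complex \<Rightarrow> complex \<Rightarrow> complex" where
  "Psi z0 z = 1 / (z - z0)"

text \<open>hat G = Psi(G); since infinity is in G and Psi(infinity) = 0, 0 belongs to hat G.\<close>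
definition Ghat :: "complex \<Rightarrow> complex set \<Rightarrow> complex set" where
  "Ghat z0 G = Psi z0 ` G \<union> {0}"

text \<open>hat G^- = Psi(G^-); the point z0 is mapped to infinity, so the finite part is
  Psi(G^- - {z0}).\<close>
definition Gminus_hat :: "complex \<Rightarrow> nat \<Rightarrow> (nat \<Rightarrow> real \<Rightarrow> complex) \<Rightarrow> complex set" where
  "Gminus_hat z0 m \<eta> = Psi z0 ` (Gminus m \<eta> - {z0})"

definition zeta :: "complex \<Rightarrow> (nat \<Rightarrow> real \<Rightarrow> complex) \<Rightarrow> nat \<Rightarrow> real \<Rightarrow> complex" where
  "zeta z0 \<eta> k s = 1 / (\<eta> k s - z0)"

definition Ahat :: "complex \<Rightarrow> (nat \<Rightarrow> real \<Rightarrow> complex) \<Rightarrow> (nat \<Rightarrow> real \<Rightarrow> complex)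
    \<Rightarrow> nat \<Rightarrow> real \<Rightarrow> complex" where
  "Ahat z0 \<eta> A k s = zeta z0 \<eta> k s * A k s"

text \<open>"f analytic in D, continuous up to the boundary": holomorphic on the open set D and
  continuous on its closure; boundary values are then the values on the boundary.
  For unbounded D, "f(infinity) = 0" is expressed by f tending to 0 at infinity
  (together with holomorphy near infinity this means f is analytic at infinity with value 0).\<close>

definition Rplus :: "nat \<Rightarrow> (nat \<Rightarrow> real \<Rightarrow> complex) \<Rightarrow> complex set \<Rightarrow> (nat \<Rightarrow> real \<Rightarrow> complex)
    \<Rightarrow> (nat \<Rightarrow> real \<Rightarrow> real) set" where
  "Rplus m \<eta> G A = {\<gamma> \<in> Hsp m. \<exists>f. f holomorphic_on G \<and> continuous_on (closure G) f \<and>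
      (f \<longlongrightarrow> 0) at_infinity \<and>
      (\<forall>k\<in>{1..m}. \<forall>s\<in>{0..2*pi}. \<gamma> k s = Re (A k s * f (\<eta> k s)))}"

definition Splus :: "nat \<Rightarrow> (nat \<Rightarrow> real \<Rightarrow> complex) \<Rightarrow> complex set \<Rightarrow> (nat \<Rightarrow> real \<Rightarrow> complex)
    \<Rightarrow> (nat \<Rightarrow> real \<Rightarrow> real) set" where
  "Splus m \<eta> G A = {\<gamma> \<in> Hsp m. \<exists>f. f holomorphic_on G \<and> continuous_on (closure G) f \<and>
      (f \<longlongrightarrow> 0) at_infinity \<and>
      (\<forall>k\<in>{1..m}. \<forall>s\<in>{0..2*pi}. complex_of_real (\<gamma> k s) = A k s * f (\<eta> k s))}"

definition Rminus :: "nat \<Rightarrow> (nat \<Rightarrow> real \<Rightarrow> complex) \<Rightarrow> (nat \<Rightarrow> real \<Rightarrow> complex)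
    \<Rightarrow> (nat \<Rightarrow> real \<Rightarrow> real) set" where
  "Rminus m \<eta> A = {\<gamma> \<in> Hsp m. \<exists>g. g holomorphic_on Gminus m \<eta> \<and>
      continuous_on (closure (Gminus m \<eta>)) g \<and>
      (\<forall>k\<in>{1..m}. \<forall>s\<in>{0..2*pi}. \<gamma> k s = Re (A k s * g (\<eta> k s)))}"

definition Sminus :: "nat \<Rightarrow> (nat \<Rightarrow> real \<Rightarrow> complex) \<Rightarrow> (nat \<Rightarrow> real \<Rightarrow> complex)
    \<Rightarrow> (nat \<Rightarrow> real \<Rightarrow> real) set" where
  "Sminus m \<eta> A = {\<gamma> \<in> Hsp m. \<exists>g. g holomorphic_on Gminus m \<eta> \<and>
      continuous_on (closure (Gminus m \<eta>)) g \<and>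
      (\<forall>k\<in>{1..m}. \<forall>s\<in>{0..2*pi}. complex_of_real (\<gamma> k s) = A k s * g (\<eta> k s))}"

definition Rplus_hat :: "complex \<Rightarrow> nat \<Rightarrow> (nat \<Rightarrow> real \<Rightarrow> complex) \<Rightarrow> complex set
    \<Rightarrow> (nat \<Rightarrow> real \<Rightarrow> complex) \<Rightarrow> (nat \<Rightarrow> real \<Rightarrow> real) set" where
  "Rplus_hat z0 m \<eta> G A = {\<gamma> \<in> Hsp m. \<exists>f. f holomorphic_on Ghat z0 G \<and>
      continuous_on (closure (Ghat z0 G)) f \<and>
      (\<forall>k\<in>{1..m}. \<forall>s\<in>{0..2*pi}. \<gamma> k s = Re (Ahat z0 \<eta> A k s * f (zeta z0 \<eta> k s)))}"

definition Splus_hat :: "complex \<Rightarrow> nat \<Rightarrow> (nat \<Rightarrow> real \<Rightarrow> complex) \<Rightarrow> complex set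
    \<Rightarrow> (nat \<Rightarrow> real \<Rightarrow> complex) \<Rightarrow> (nat \<Rightarrow> real \<Rightarrow> real) set" where
  "Splus_hat z0 m \<eta> G A = {\<gamma> \<in> Hsp m. \<exists>f. f holomorphic_on Ghat z0 G \<and>
      continuous_on (closure (Ghat z0 G)) f \<and>
      (\<forall>k\<in>{1..m}. \<forall>s\<in>{0..2*pi}.
         complex_of_real (\<gamma> k s) = Ahat z0 \<eta> A k s * f (zeta z0 \<eta> k s))}"

definition Rminus_hat :: "complex \<Rightarrow> nat \<Rightarrow> (nat \<Rightarrow> real \<Rightarrow> complex)
    \<Rightarrow> (nat \<Rightarrow> real \<Rightarrow> complex) \<Rightarrow> (nat \<Rightarrow> real \<Rightarrow> real) set" where
  "Rminus_hat z0 m \<eta> A = {\<gamma> \<in> Hsp m. \<exists>g. g holomorphic_on Gminus_hat z0 m \<eta> \<and>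
      continuous_on (closure (Gminus_hat z0 m \<eta>)) g \<and> (g \<longlongrightarrow> 0) at_infinity \<and>
      (\<forall>k\<in>{1..m}. \<forall>s\<in>{0..2*pi}. \<gamma> k s = Re (Ahat z0 \<eta> A k s * g (zeta z0 \<eta> k s)))}"

definition Sminus_hat :: "complex \<Rightarrow> nat \<Rightarrow> (nat \<Rightarrow> real \<Rightarrow> complex)
    \<Rightarrow> (nat \<Rightarrow> real \<Rightarrow> complex) \<Rightarrow> (nat \<Rightarrow> real \<Rightarrow> real) set" where
  "Sminus_hat z0 m \<eta> A = {\<gamma> \<in> Hsp m. \<exists>g. g holomorphic_on Gminus_hat z0 m \<eta> \<and>
      continuous_on (closure (Gminus_hat z0 m \<eta>)) g \<and> (g \<longlongrightarrow> 0) at_infinity \<and>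
      (\<forall>k\<in>{1..m}. \<forall>s\<in>{0..2*pi}.
         complex_of_real (\<gamma> k s) = Ahat z0 \<eta> A k s * g (zeta z0 \<eta> k s))}"

end

theory Submission
  imports Defs
begin

lemma lim_Phi_inf: "filterlim (\<lambda>w::complex. z0 + 1/w) at_infinity (at 0)"
proof -
  have "filterlim (\<lambda>w::complex. 1/w) at_infinity (at 0)"
  proof -
    have e: "(\<lambda>w::complex. 1/w) = inverse" by (rule ext) (simp add: inverse_eq_divide)
    show ?thesis unfolding e by (rule filterlim_inverse_at_infinity)
  qed
  then show ?thesis using tendsto_add_filterlim_at_infinity'[of "\<lambda>w::complex. 1/w" "at 0" "\<lambda>_. z0" z0]
    by (simp add: add.commute)
qed

lemma lim_Psi_inf: "filterlim (\<lambda>z::complex. 1/(z - z0)) at_infinity (at z0)"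
proof -
  have "filterlim (\<lambda>z::complex. z - z0) (at 0) (at z0)"
    unfolding filterlim_at by (auto simp: eventually_at_filter intro!: tendsto_eq_intros)
  then show ?thesis
    by (intro filterlim_divide_at_infinity[where c=1]) auto
qed

lemma lim_Psi_0: "((\<lambda>z::complex. 1/(z - z0)) \<longlongrightarrow> 0) at_infinity"
proof -
  have "filterlim (\<lambda>z::complex. z - z0) at_infinity at_infinity"
    using tendsto_add_filterlim_at_infinity'[of "\<lambda>z::complex. z" at_infinity "\<lambda>_. -z0" "-z0"]
    by (simp add: filterlim_ident)
  then show ?thesis by (intro tendsto_divide_0[where c=1]) auto
qed

lemma lim_Phi_z0: "((\<lambda>w::complex. z0 + 1/w) \<longlongrightarrow> z0) at_infinity"
proof -
  have "((\<lambda>w::complex. 1/w) \<longlongrightarrow> 0) at_infinity"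
  proof -
    have e: "(\<lambda>w::complex. 1/w) = inverse" by (rule ext) (simp add: inverse_eq_divide)
    show ?thesis unfolding e by (rule tendsto_inverse_0)
  qed
  then show ?thesis using tendsto_add[of "\<lambda>_. z0" z0 at_infinity "\<lambda>w::complex. 1/w" 0] by simp
qed

lemma eventually_far:
  assumes "\<forall>z. R \<le> norm z \<longrightarrow> z \<in> G"
  shows "eventually (\<lambda>z. z \<in> G) at_infinity"
  using assms unfolding eventually_at_infinity by blast


lemma dirP2:
  fixes G :: "complex set"
  assumes z0G: "z0 \<notin> closure G" and far: "\<forall>z. R \<le> norm z \<longrightarrow> z \<in> G"
    and hol: "fh holomorphic_on Ghat z0 G" and cont: "continuous_on (closure (Ghat z0 G)) fh"
  defines "f \<equiv> (\<lambda>z. fh (1/(z - z0)) * (1/(z - z0)))"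
  shows "f holomorphic_on G \<and> continuous_on (closure G) f \<and> (f \<longlongrightarrow> 0) at_infinity"
proof (intro conjI)
  have z0G': "z0 \<notin> G" using z0G closure_subset by blast
  have img: "(\<lambda>z. 1/(z - z0)) ` G \<subseteq> Ghat z0 G" by (auto simp: Ghat_def Psi_def)
  have hP: "(\<lambda>z. 1/(z - z0)) holomorphic_on G" using z0G'
    by (intro holomorphic_intros) auto
  have "(fh \<circ> (\<lambda>z. 1/(z - z0))) holomorphic_on G"
    by (rule holomorphic_on_compose[OF hP holomorphic_on_subset[OF hol img]])
  then show "f holomorphic_on G" unfolding f_def o_def using hP z0G'
    by (intro holomorphic_intros) auto
  have cP: "continuous_on (closure G) (\<lambda>z. 1/(z - z0))" using z0G
    by (intro continuous_intros) auto
  have img2: "(\<lambda>z. 1/(z - z0)) ` closure G \<subseteq> closure (Ghat z0 G)"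
    by (rule image_closure_subset[OF cP]) (use img closure_subset in auto)
  have "continuous_on (closure G) (fh \<circ> (\<lambda>z. 1/(z - z0)))"
    by (rule continuous_on_compose[OF cP continuous_on_subset[OF cont img2]])
  then show "continuous_on (closure G) f" unfolding f_def o_def using cP z0G
    by (intro continuous_intros) auto
  have zin: "0 \<in> closure (Ghat z0 G)" using closure_subset[of "Ghat z0 G"] by (auto simp: Ghat_def)
  have t0: "(fh \<longlongrightarrow> fh 0) (at 0 within closure (Ghat z0 G))"
    using cont zin by (simp add: continuous_on_def)
  have fl: "filterlim (\<lambda>z. 1/(z - z0)) (at 0 within closure (Ghat z0 G)) at_infinity"
    unfolding filterlim_at
  proof
    have "eventually (\<lambda>z. z \<in> G) at_infinity" using far by (rule eventually_far)
    then show "\<forall>\<^sub>F x in at_infinity. 1 / (x - z0) \<in> closure (Ghat z0 G) \<and> 1 / (x - z0) \<noteq> 0"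
      by eventually_elim (use z0G' img closure_subset in fastforce)
  qed (rule lim_Psi_0)
  have "((\<lambda>z. fh (1/(z - z0))) \<longlongrightarrow> fh 0) at_infinity"
    by (rule filterlim_compose[OF t0 fl])
  from tendsto_mult[OF this lim_Psi_0] show "(f \<longlongrightarrow> 0) at_infinity" unfolding f_def by simp
qed


lemma dirM1:
  fixes D :: "complex set"
  assumes oD: "open D" and bD: "bounded D" and z0D: "z0 \<in> D"
    and hol: "g holomorphic_on D" and cont: "continuous_on (closure D) g"
  defines "E \<equiv> Psi z0 ` (D - {z0})"
  defines "gh \<equiv> (\<lambda>w. g (z0 + 1/w) / w)"
  shows "gh holomorphic_on E \<and> continuous_on (closure E) gh \<and> (gh \<longlongrightarrow> 0) at_infinity"
proof (intro conjI)
  have E0: "\<And>w. w \<in> E \<Longrightarrow> w \<noteq> 0 \<and> z0 + 1/w \<in> D"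
    by (auto simp: E_def Psi_def)
  have hP: "(\<lambda>w. z0 + 1/w) holomorphic_on E" using E0
    by (intro holomorphic_intros) auto
  have img: "(\<lambda>w. z0 + 1/w) ` E \<subseteq> D" using E0 by auto
  have "(g \<circ> (\<lambda>w. z0 + 1/w)) holomorphic_on E"
    by (rule holomorphic_on_compose[OF hP holomorphic_on_subset[OF hol img]])
  then show "gh holomorphic_on E" unfolding gh_def o_def using E0
    by (intro holomorphic_intros) auto
  obtain B where B: "\<forall>x\<in>D. norm x \<le> B" using bD by (auto simp: bounded_iff)
  define \<delta> where "\<delta> = 1 / (B + norm z0 + 1)"
  have Bp: "B \<ge> 0" using B z0D norm_ge_zero[of z0] by (meson order_trans)
  have dp: "\<delta> > 0" using Bp norm_ge_zero[of z0] unfolding \<delta>_def by (intro divide_pos_pos) linarith+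
  define C where "C = {w. \<delta> \<le> norm w} \<inter> (\<lambda>w. z0 + 1/w) -` closure D"
  have cC: "continuous_on {w. \<delta> \<le> norm w} (\<lambda>w. z0 + 1/w)" using dp
    by (intro continuous_intros) auto
  have clC: "closed C" unfolding C_def
    by (rule continuous_closed_preimage[OF cC]) (auto intro: closed_Collect_le continuous_intros)
  have "E \<subseteq> C"
  proof
    fix w assume w: "w \<in> E"
    then obtain z where z: "z \<in> D" "z \<noteq> z0" "w = 1/(z - z0)" by (auto simp: E_def Psi_def)
    have "norm (z - z0) \<le> B + norm z0" using B z(1) norm_triangle_ineq4[of z z0] by force
    moreover have "norm (z - z0) > 0" using z by simp
    ultimately have "\<delta> \<le> 1 / norm (z - z0)" unfolding \<delta>_def
      using Bp norm_ge_zero[of z0] by (intro divide_left_mono) (auto intro!: mult_pos_pos add_nonneg_pos)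
    then have "\<delta> \<le> norm w" using z by (simp add: norm_divide)
    moreover have "z0 + 1/w \<in> closure D" using z closure_subset by auto
    ultimately show "w \<in> C" by (auto simp: C_def)
  qed
  then have sub: "closure E \<subseteq> C" using clC by (rule closure_minimal)
  have "continuous_on C (g \<circ> (\<lambda>w. z0 + 1/w))"
    by (rule continuous_on_compose[OF continuous_on_subset[OF cC] continuous_on_subset[OF cont]])
       (auto simp: C_def)
  then have "continuous_on C gh" unfolding gh_def o_def using dp
    by (intro continuous_intros) (auto simp: C_def)
  then show "continuous_on (closure E) gh" using sub by (rule continuous_on_subset)
  have "isCont g z0"
    using hol oD z0D holomorphic_on_imp_continuous_on continuous_on_eq_continuous_at by blast
  then have "((\<lambda>w. g (z0 + 1/w)) \<longlongrightarrow> g z0) at_infinity"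
    using isCont_tendsto_compose[OF _ lim_Phi_z0] by blast
  then show "(gh \<longlongrightarrow> 0) at_infinity" unfolding gh_def
    by (rule tendsto_divide_0) (simp add: filterlim_ident)
qed


lemma pole_ext:
  fixes h :: "complex \<Rightarrow> complex"
  assumes hol: "h holomorphic_on (ball a r - {a})" and lim: "(h \<longlongrightarrow> 0) (at a)" and r: "r > 0"
  shows "\<exists>c. (\<lambda>z. if z = a then c else h z / (z - a)) holomorphic_on ball a r"
proof -
  define H where "H = (\<lambda>y. if y = a then 0 else h y)"
  have HH: "H holomorphic_on ball a r" unfolding H_def
    by (rule removable_singularity[OF hol open_ball lim])
  have "(\<lambda>z. if z = a then deriv H a else (H z - H a) / (z - a)) holomorphic_on ball a r"
    by (rule pole_lemma[OF HH]) (simp add: r)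
  then have "(\<lambda>z. if z = a then deriv H a else h z / (z - a)) holomorphic_on ball a r"
    by (rule holomorphic_transform) (simp add: H_def)
  then show ?thesis by blast
qed


lemma dirP1:
  fixes G :: "complex set"
  assumes oG: "open G" and z0G: "z0 \<notin> G" and far: "\<forall>z. R \<le> norm z \<longrightarrow> z \<in> G"
    and hol: "f holomorphic_on G" and cont: "continuous_on (closure G) f"
    and lim: "(f \<longlongrightarrow> 0) at_infinity"
  shows "\<exists>fh. fh holomorphic_on Ghat z0 G \<and> continuous_on (closure (Ghat z0 G)) fh \<and>
           (\<forall>z. z \<noteq> z0 \<longrightarrow> fh (1/(z - z0)) * (1/(z - z0)) = f z)"
proof -
  define R' where "R' = max R 1"
  define r where "r = 1 / (R' + norm z0 + 1)"
  have R'p: "R' > 0" by (simp add: R'_def)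
  have rp: "r > 0" unfolding r_def using R'p norm_ge_zero[of z0] by (intro divide_pos_pos) linarith+
  have key: "z0 + 1/w \<in> G" if w: "w \<in> ball 0 r - {0}" for w
  proof -
    have wn: "0 < norm w" "norm w < r" using w by auto
    have "R' + norm z0 + 1 < 1 / norm w"
      using wn R'p norm_ge_zero[of z0] unfolding r_def
      by (simp add: field_simps)
    then have "R' + norm z0 + 1 < norm (1/w)" by (simp add: norm_divide)
    moreover have "norm (1/w) - norm z0 \<le> norm (z0 + 1/w)"
      using norm_triangle_ineq3[of "1/w" "-z0"] by (simp add: norm_minus_commute add.commute)
    ultimately have "R \<le> norm (z0 + 1/w)" unfolding R'_def by linarith
    then show ?thesis using far by blast
  qed
  define h where "h = (\<lambda>w. f (z0 + 1/w))"
  have hP: "(\<lambda>w. z0 + 1/w) holomorphic_on (ball 0 r - {0})"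
    by (intro holomorphic_intros) auto
  have "(f \<circ> (\<lambda>w. z0 + 1/w)) holomorphic_on (ball 0 r - {0})"
    by (rule holomorphic_on_compose[OF hP holomorphic_on_subset[OF hol]]) (rule image_subsetI, rule key)
  then have hh: "h holomorphic_on (ball 0 r - {0})" by (simp add: h_def o_def)
  have hl: "(h \<longlongrightarrow> 0) (at 0)" unfolding h_def
    by (rule filterlim_compose[OF lim lim_Phi_inf])
  obtain c where c: "(\<lambda>z. if z = 0 then c else h z / (z - 0)) holomorphic_on ball 0 r"
    using pole_ext[OF hh hl rp] by blast
  define fh where "fh = (\<lambda>w. if w = 0 then c else f (z0 + 1/w) / w)"
  have fh1: "fh holomorphic_on ball 0 r"
    by (rule holomorphic_transform[OF c]) (simp add: fh_def h_def)
  define V where "V = {w. w \<noteq> 0} \<inter> (\<lambda>w. z0 + 1/w) -` G"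
  have cV: "continuous_on {w. w \<noteq> 0} (\<lambda>w. z0 + 1/w)" by (intro continuous_intros) auto
  have oV: "open V" unfolding V_def
    by (rule continuous_open_preimage[OF cV _ oG]) (simp add: open_Collect_neg)
  have hV: "(\<lambda>w. z0 + 1/w) holomorphic_on V" unfolding V_def by (intro holomorphic_intros) auto
  have "(f \<circ> (\<lambda>w. z0 + 1/w)) holomorphic_on V"
    by (rule holomorphic_on_compose[OF hV holomorphic_on_subset[OF hol]]) (auto simp: V_def)
  then have "(\<lambda>w. f (z0 + 1/w) / w) holomorphic_on V" unfolding o_def
    by (intro holomorphic_intros) (auto simp: V_def)
  then have fh2: "fh holomorphic_on V"
    by (rule holomorphic_transform) (simp add: fh_def V_def)
  have fhU: "fh holomorphic_on (V \<union> ball 0 r)"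
    by (rule holomorphic_on_Un[OF fh2 fh1 oV open_ball])
  have GU: "Ghat z0 G \<subseteq> V \<union> ball 0 r"
  proof
    fix w assume "w \<in> Ghat z0 G"
    then consider "w = 0" | z where "z \<in> G" "w = 1/(z - z0)" by (auto simp: Ghat_def Psi_def)
    then show "w \<in> V \<union> ball 0 r"
    proof cases
      case 1 then show ?thesis using rp by simp
    next
      case 2 then have "z \<noteq> z0" using z0G by auto
      then show ?thesis using 2 by (auto simp: V_def)
    qed
  qed
  have holo: "fh holomorphic_on Ghat z0 G" by (rule holomorphic_on_subset[OF fhU GU])
  define C1 where "C1 = cball (0::complex) (r/2)"
  define C2 where "C2 = {w. r/2 \<le> norm w} \<inter> (\<lambda>w. z0 + 1/w) -` closure G"
  have cC: "continuous_on {w. r/2 \<le> norm w} (\<lambda>w. z0 + 1/w)" using rp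
    by (intro continuous_intros) auto
  have clr: "closed {w::complex. r/2 \<le> norm w}"
    by (rule closed_Collect_le) (intro continuous_intros)+
  have clC2: "closed C2" unfolding C2_def
    by (rule continuous_closed_preimage[OF cC clr]) simp
  have clC1: "closed C1" by (simp add: C1_def)
  have C1b: "C1 \<subseteq> ball 0 r" using rp by (auto simp: C1_def)
  have "Ghat z0 G \<subseteq> C1 \<union> C2"
  proof
    fix w assume "w \<in> Ghat z0 G"
    then consider "w = 0" | z where "z \<in> G" "w = 1/(z - z0)" by (auto simp: Ghat_def Psi_def)
    then show "w \<in> C1 \<union> C2"
    proof cases
      case 1 then show ?thesis using rp by (simp add: C1_def)
    next
      case 2 then have "z \<noteq> z0" using z0G by auto
      then have "z0 + 1/w \<in> closure G" using 2 closure_subset by auto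
      then show ?thesis by (auto simp: C1_def C2_def)
    qed
  qed
  then have sub: "closure (Ghat z0 G) \<subseteq> C1 \<union> C2"
    using clC1 clC2 by (intro closure_minimal) auto
  have ct1: "continuous_on C1 fh"
    using holomorphic_on_imp_continuous_on[OF fh1] C1b by (rule continuous_on_subset)
  have "continuous_on C2 (f \<circ> (\<lambda>w. z0 + 1/w))"
    by (rule continuous_on_compose[OF continuous_on_subset[OF cC] continuous_on_subset[OF cont]])
       (auto simp: C2_def)
  then have "continuous_on C2 (\<lambda>w. f (z0 + 1/w) / w)" unfolding o_def using rp
    by (intro continuous_intros) (auto simp: C2_def)
  then have ct2: "continuous_on C2 fh"
    by (rule continuous_on_eq) (use rp in \<open>auto simp: C2_def fh_def\<close>)
  have "continuous_on (C1 \<union> C2) fh" by (rule continuous_on_closed_Un[OF clC1 clC2 ct1 ct2])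
  then have cont': "continuous_on (closure (Ghat z0 G)) fh" using sub by (rule continuous_on_subset)
  have "\<forall>z. z \<noteq> z0 \<longrightarrow> fh (1/(z - z0)) * (1/(z - z0)) = f z"
    by (auto simp: fh_def)
  then show ?thesis using holo cont' by blast
qed


lemma dirM2:
  fixes D :: "complex set"
  assumes oD: "open D" and z0D: "z0 \<in> D"
    and hol: "gh holomorphic_on Psi z0 ` (D - {z0})"
    and cont: "continuous_on (closure (Psi z0 ` (D - {z0}))) gh"
    and lim: "(gh \<longlongrightarrow> 0) at_infinity"
  shows "\<exists>g. g holomorphic_on D \<and> continuous_on (closure D) g \<and>
           (\<forall>z. z \<noteq> z0 \<longrightarrow> g z = gh (1/(z - z0)) * (1/(z - z0)))"
proof -
  define E where "E = Psi z0 ` (D - {z0})"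
  obtain r where rp: "r > 0" and rD: "ball z0 r \<subseteq> D" using oD z0D openE by blast
  have imgE: "(\<lambda>z. 1/(z - z0)) ` (D - {z0}) \<subseteq> E" by (auto simp: E_def Psi_def)
  have hP: "(\<lambda>z. 1/(z - z0)) holomorphic_on (ball z0 r - {z0})"
    by (intro holomorphic_intros) auto
  have "(gh \<circ> (\<lambda>z. 1/(z - z0))) holomorphic_on (ball z0 r - {z0})"
    by (rule holomorphic_on_compose[OF hP holomorphic_on_subset[OF hol]])
       (use imgE rD in \<open>auto simp: E_def\<close>)
  then have hh: "(\<lambda>z. gh (1/(z - z0))) holomorphic_on (ball z0 r - {z0})" by (simp add: o_def)
  have hl: "((\<lambda>z. gh (1/(z - z0))) \<longlongrightarrow> 0) (at z0)"
    by (rule filterlim_compose[OF lim lim_Psi_inf])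
  obtain c where c: "(\<lambda>z. if z = z0 then c else gh (1/(z - z0)) / (z - z0)) holomorphic_on ball z0 r"
    using pole_ext[OF hh hl rp] by blast
  define g where "g = (\<lambda>z. if z = z0 then c else gh (1/(z - z0)) * (1/(z - z0)))"
  have g1: "g holomorphic_on ball z0 r"
    by (rule holomorphic_transform[OF c]) (simp add: g_def)
  have hP2: "(\<lambda>z. 1/(z - z0)) holomorphic_on (D - {z0})"
    by (intro holomorphic_intros) auto
  have "(gh \<circ> (\<lambda>z. 1/(z - z0))) holomorphic_on (D - {z0})"
    by (rule holomorphic_on_compose[OF hP2 holomorphic_on_subset[OF hol]])
       (use imgE in \<open>auto simp: E_def\<close>)
  then have "(\<lambda>z. gh (1/(z - z0)) * (1/(z - z0))) holomorphic_on (D - {z0})" unfolding o_def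
    by (intro holomorphic_intros) auto
  then have g2: "g holomorphic_on (D - {z0})"
    by (rule holomorphic_transform) (simp add: g_def)
  have "g holomorphic_on ((D - {z0}) \<union> ball z0 r)"
    by (rule holomorphic_on_Un[OF g2 g1]) (use oD in auto)
  moreover have "(D - {z0}) \<union> ball z0 r = D" using rD rp z0D by auto
  ultimately have holo: "g holomorphic_on D" by simp
  define C1 where "C1 = cball z0 (r/2)"
  define C2 where "C2 = {z. r/2 \<le> norm (z - z0)} \<inter> (\<lambda>z. 1/(z - z0)) -` closure E"
  have cC: "continuous_on {z. r/2 \<le> norm (z - z0)} (\<lambda>z. 1/(z - z0))" using rp
    by (intro continuous_intros) auto
  have clr: "closed {z::complex. r/2 \<le> norm (z - z0)}"
    by (rule closed_Collect_le) (intro continuous_intros)+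
  have clC2: "closed C2" unfolding C2_def
    by (rule continuous_closed_preimage[OF cC clr]) simp
  have clC1: "closed C1" by (simp add: C1_def)
  have C1b: "C1 \<subseteq> ball z0 r" using rp by (auto simp: C1_def)
  have "D \<subseteq> C1 \<union> C2"
  proof
    fix z assume z: "z \<in> D"
    show "z \<in> C1 \<union> C2"
    proof (cases "z \<in> C1")
      case False
      then have "z \<noteq> z0" using rp by (auto simp: C1_def)
      then have "1/(z - z0) \<in> closure E" using z imgE closure_subset by blast
      then show ?thesis using False by (auto simp: C1_def C2_def dist_norm norm_minus_commute)
    qed simp
  qed
  then have sub: "closure D \<subseteq> C1 \<union> C2"
    using clC1 clC2 by (intro closure_minimal) auto
  have ct1: "continuous_on C1 g"
    using holomorphic_on_imp_continuous_on[OF g1] C1b by (rule continuous_on_subset)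
  have "continuous_on C2 (gh \<circ> (\<lambda>z. 1/(z - z0)))"
    by (rule continuous_on_compose[OF continuous_on_subset[OF cC] continuous_on_subset[OF cont]])
       (auto simp: C2_def E_def)
  then have "continuous_on C2 (\<lambda>z. gh (1/(z - z0)) * (1/(z - z0)))" unfolding o_def using rp
    by (intro continuous_intros) (auto simp: C2_def)
  then have ct2: "continuous_on C2 g"
    by (rule continuous_on_eq) (use rp in \<open>auto simp: C2_def g_def\<close>)
  have "continuous_on (C1 \<union> C2) g" by (rule continuous_on_closed_Un[OF clC1 clC2 ct1 ct2])
  then have cont': "continuous_on (closure D) g" using sub by (rule continuous_on_subset)
  have "\<forall>z. z \<noteq> z0 \<longrightarrow> g z = gh (1/(z - z0)) * (1/(z - z0))"
    by (auto simp: g_def)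
  then show ?thesis using holo cont' by blast
qed

theorem lemma4p2:
  fixes m :: nat and \<eta> A :: "nat \<Rightarrow> real \<Rightarrow> complex" and G :: "complex set" and z0 :: complex
  assumes m_pos: "1 \<le> m"
    and periodic: "\<forall>k\<in>{1..m}. \<forall>s. \<eta> k (s + 2*pi) = \<eta> k s"
    and C2: "\<forall>k\<in>{1..m}. \<exists>d1 d2. \<forall>t. (\<eta> k has_vector_derivative d1 t) (at t) \<and>
               (d1 has_vector_derivative d2 t) (at t) \<and> continuous_on UNIV d2 \<and> d1 t \<noteq> 0"
    and simple: "\<forall>k\<in>{1..m}. inj_on (\<eta> k) {0..<2*pi}"
    and separated: "\<forall>k\<in>{1..m}. \<forall>l\<in>{1..m}. k \<noteq> l \<longrightarrow> Gam_k \<eta> l \<subseteq> outside (Gam_k \<eta> k)"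
    and clockwise: "\<forall>k\<in>{1..m}. \<forall>w\<in>inside (Gam_k \<eta> k).
               winding_number (\<lambda>t. \<eta> k (2*pi*t)) w = -1"
    and G_def: "G = - (Gam m \<eta> \<union> Gminus m \<eta>)"
    and G_region: "open G" "connected G"
    and zero_in: "0 \<in> G"
    and A_nz: "\<forall>k\<in>{1..m}. \<forall>s. A k s \<noteq> 0"
    and A_per: "\<forall>k\<in>{1..m}. \<forall>s. A k (s + 2*pi) = A k s"
    and A_C1: "\<forall>k\<in>{1..m}. \<exists>dA. \<forall>t. (A k has_vector_derivative dA t) (at t) \<and> continuous_on UNIV dA"
    and z0_in: "z0 \<in> inside (Gam_k \<eta> m)"
  shows "Rplus_hat z0 m \<eta> G A = Rplus m \<eta> G A \<and>
         Splus_hat z0 m \<eta> G A = Splus m \<eta> G A \<and>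
         Rminus_hat z0 m \<eta> A = Rminus m \<eta> A \<and>
         Sminus_hat z0 m \<eta> A = Sminus m \<eta> A"
proof -
  have cont_eta: "continuous_on UNIV (\<eta> k)" if k: "k \<in> {1..m}" for k
  proof -
    obtain d1 d2 where "\<forall>t. (\<eta> k has_vector_derivative d1 t) (at t)" using C2 k by blast
    then show ?thesis
      by (intro continuous_at_imp_continuous_on) (auto intro: has_vector_derivative_continuous)
  qed
  have cpk: "compact (Gam_k \<eta> k)" if k: "k \<in> {1..m}" for k
    unfolding Gam_k_def
    by (rule compact_continuous_image[OF continuous_on_subset[OF cont_eta[OF k]]]) auto
  have bGam: "bounded (Gam m \<eta>)" unfolding Gam_def
    using cpk by (intro bounded_UN) (auto intro: compact_imp_bounded)
  have bIn: "bounded (inside (Gam_k \<eta> k))" if "k \<in> {1..m}" for k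
    by (rule bounded_inside[OF compact_imp_bounded[OF cpk[OF that]]])
  have bGm: "bounded (Gminus m \<eta>)" unfolding Gminus_def
    using bIn by (intro bounded_UN) auto
  have oIn: "open (inside (Gam_k \<eta> k))" if k: "k \<in> {1..m}" for k
    using cpk[OF k] by (intro open_inside compact_imp_closed)
  have oGm: "open (Gminus m \<eta>)" unfolding Gminus_def using oIn by (intro open_UN) auto
  obtain B where B: "\<forall>x\<in>Gam m \<eta> \<union> Gminus m \<eta>. norm x \<le> B"
    using bounded_Un[of "Gam m \<eta>" "Gminus m \<eta>"] bGam bGm by (auto simp: bounded_iff)
  have far: "\<forall>z. B + 1 \<le> norm z \<longrightarrow> z \<in> G"
  proof (intro allI impI)
    fix z :: complex assume z: "B + 1 \<le> norm z"
    have "z \<notin> Gam m \<eta> \<union> Gminus m \<eta>"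
    proof
      assume "z \<in> Gam m \<eta> \<union> Gminus m \<eta>"
      then have "norm z \<le> B" using B by blast
      then show False using z by linarith
    qed
    then show "z \<in> G" using G_def by simp
  qed
  have mm: "m \<in> {1..m}" using m_pos by simp
  have z0Gm: "z0 \<in> Gminus m \<eta>" unfolding Gminus_def using mm z0_in by (rule UN_I)
  have "inside (Gam_k \<eta> m) \<subseteq> Gminus m \<eta>" unfolding Gminus_def using mm by (rule UN_upper)
  then have "inside (Gam_k \<eta> m) \<inter> G = {}" unfolding G_def by blast
  then have "inside (Gam_k \<eta> m) \<inter> closure G = {}"
    using open_Int_closure_eq_empty[OF oIn[OF mm]] by blast
  then have z0cl: "z0 \<notin> closure G" using z0_in by blast
  then have z0G: "z0 \<notin> G" using closure_subset by blast
  have eta_ne: "\<eta> k s \<noteq> z0" if k: "k \<in> {1..m}" and s: "s \<in> {0..2*pi}" for k s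
  proof -
    have e: "\<eta> k s \<in> Gam_k \<eta> k" using s by (simp add: Gam_k_def)
    show ?thesis
    proof (cases "k = m")
      case True
      have "z0 \<notin> Gam_k \<eta> m" using z0_in inside_no_overlap[of "Gam_k \<eta> m"] by (auto simp del: inside_no_overlap)
      then show ?thesis using e True by auto
    next
      case False
      have "Gam_k \<eta> k \<subseteq> outside (Gam_k \<eta> m)" using separated mm k False by metis
      then have "\<eta> k s \<in> outside (Gam_k \<eta> m)" using e by (rule subsetD)
      moreover have "z0 \<notin> outside (Gam_k \<eta> m)"
        using z0_in inside_Int_outside[of "Gam_k \<eta> m"] by (auto simp del: inside_Int_outside)
      ultimately show ?thesis by auto
    qed
  qed
  have idP: "Ahat z0 \<eta> A k s * fh (zeta z0 \<eta> k s) = A k s * (fh (1/(\<eta> k s - z0)) * (1/(\<eta> k s - z0)))"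
    for fh k s by (simp add: Ahat_def zeta_def mult_ac)
  have idM: "Ahat z0 \<eta> A k s * (g (z0 + 1/zeta z0 \<eta> k s) / zeta z0 \<eta> k s) = A k s * g (\<eta> k s)"
    if "k \<in> {1..m}" "s \<in> {0..2*pi}" for g k s
    using eta_ne[OF that] by (simp add: Ahat_def zeta_def)
  have P2: "\<exists>f. f holomorphic_on G \<and> continuous_on (closure G) f \<and> (f \<longlongrightarrow> 0) at_infinity \<and>
      (\<forall>k\<in>{1..m}. \<forall>s\<in>{0..2*pi}. A k s * f (\<eta> k s) = Ahat z0 \<eta> A k s * fh (zeta z0 \<eta> k s))"
    if a: "fh holomorphic_on Ghat z0 G" "continuous_on (closure (Ghat z0 G)) fh" for fh
  proof -
    define f where "f = (\<lambda>z. fh (1/(z - z0)) * (1/(z - z0)))"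
    have "f holomorphic_on G \<and> continuous_on (closure G) f \<and> (f \<longlongrightarrow> 0) at_infinity"
      unfolding f_def by (rule dirP2[OF z0cl far a])
    moreover have "\<forall>k\<in>{1..m}. \<forall>s\<in>{0..2*pi}. A k s * f (\<eta> k s) = Ahat z0 \<eta> A k s * fh (zeta z0 \<eta> k s)"
      by (simp only: f_def idP) simp
    ultimately show ?thesis by blast
  qed
  have P1: "\<exists>fh. fh holomorphic_on Ghat z0 G \<and> continuous_on (closure (Ghat z0 G)) fh \<and>
      (\<forall>k\<in>{1..m}. \<forall>s\<in>{0..2*pi}. A k s * f (\<eta> k s) = Ahat z0 \<eta> A k s * fh (zeta z0 \<eta> k s))"
    if a: "f holomorphic_on G" "continuous_on (closure G) f" "(f \<longlongrightarrow> 0) at_infinity" for f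
  proof -
    obtain fh where fh: "fh holomorphic_on Ghat z0 G" "continuous_on (closure (Ghat z0 G)) fh"
      "\<forall>z. z \<noteq> z0 \<longrightarrow> fh (1/(z - z0)) * (1/(z - z0)) = f z"
      using dirP1[OF G_region(1) z0G far a] by blast
    have "\<forall>k\<in>{1..m}. \<forall>s\<in>{0..2*pi}. A k s * f (\<eta> k s) = Ahat z0 \<eta> A k s * fh (zeta z0 \<eta> k s)"
    proof (intro ballI)
      fix k s assume k: "k \<in> {1..m}" and s: "s \<in> {0..2*pi}"
      show "A k s * f (\<eta> k s) = Ahat z0 \<eta> A k s * fh (zeta z0 \<eta> k s)"
        by (simp only: idP fh(3)[rule_format, OF eta_ne[OF k s]])
    qed
    then show ?thesis using fh(1,2) by blast
  qed
  have M1: "\<exists>gh. gh holomorphic_on Gminus_hat z0 m \<eta> \<and>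
      continuous_on (closure (Gminus_hat z0 m \<eta>)) gh \<and> (gh \<longlongrightarrow> 0) at_infinity \<and>
      (\<forall>k\<in>{1..m}. \<forall>s\<in>{0..2*pi}. A k s * g (\<eta> k s) = Ahat z0 \<eta> A k s * gh (zeta z0 \<eta> k s))"
    if a: "g holomorphic_on Gminus m \<eta>" "continuous_on (closure (Gminus m \<eta>)) g" for g
  proof -
    define gh where "gh = (\<lambda>w. g (z0 + 1/w) / w)"
    have "gh holomorphic_on Gminus_hat z0 m \<eta> \<and>
      continuous_on (closure (Gminus_hat z0 m \<eta>)) gh \<and> (gh \<longlongrightarrow> 0) at_infinity"
      unfolding gh_def Gminus_hat_def by (rule dirM1[OF oGm bGm z0Gm a])
    moreover have "\<forall>k\<in>{1..m}. \<forall>s\<in>{0..2*pi}. A k s * g (\<eta> k s) = Ahat z0 \<eta> A k s * gh (zeta z0 \<eta> k s)"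
    proof (intro ballI)
      fix k s assume k: "k \<in> {1..m}" and s: "s \<in> {0..2*pi}"
      show "A k s * g (\<eta> k s) = Ahat z0 \<eta> A k s * gh (zeta z0 \<eta> k s)"
        unfolding gh_def by (rule idM[OF k s, symmetric])
    qed
    ultimately show ?thesis by blast
  qed
  have M2: "\<exists>g. g holomorphic_on Gminus m \<eta> \<and> continuous_on (closure (Gminus m \<eta>)) g \<and>
      (\<forall>k\<in>{1..m}. \<forall>s\<in>{0..2*pi}. A k s * g (\<eta> k s) = Ahat z0 \<eta> A k s * gh (zeta z0 \<eta> k s))"
    if a: "gh holomorphic_on Gminus_hat z0 m \<eta>" "continuous_on (closure (Gminus_hat z0 m \<eta>)) gh"
       "(gh \<longlongrightarrow> 0) at_infinity" for gh
  proof -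
    obtain g where g: "g holomorphic_on Gminus m \<eta>" "continuous_on (closure (Gminus m \<eta>)) g"
      "\<forall>z. z \<noteq> z0 \<longrightarrow> g z = gh (1/(z - z0)) * (1/(z - z0))"
      using dirM2[OF oGm z0Gm a[unfolded Gminus_hat_def]] by blast
    have "\<forall>k\<in>{1..m}. \<forall>s\<in>{0..2*pi}. A k s * g (\<eta> k s) = Ahat z0 \<eta> A k s * gh (zeta z0 \<eta> k s)"
    proof (intro ballI)
      fix k s assume k: "k \<in> {1..m}" and s: "s \<in> {0..2*pi}"
      show "A k s * g (\<eta> k s) = Ahat z0 \<eta> A k s * gh (zeta z0 \<eta> k s)"
        by (simp only: idP g(3)[rule_format, OF eta_ne[OF k s]])
    qed
    then show ?thesis using g(1,2) by blast
  qed
  have e1: "Rplus_hat z0 m \<eta> G A = Rplus m \<eta> G A"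
  proof (intro set_eqI iffI)
    fix \<gamma> assume "\<gamma> \<in> Rplus_hat z0 m \<eta> G A"
    then obtain fh where H: "\<gamma> \<in> Hsp m" and h1: "fh holomorphic_on Ghat z0 G" and h2: "continuous_on (closure (Ghat z0 G)) fh"
      and hr: "\<forall>k\<in>{1..m}. \<forall>s\<in>{0..2*pi}. \<gamma> k s = Re (Ahat z0 \<eta> A k s * fh (zeta z0 \<eta> k s))"
      unfolding Rplus_hat_def by blast
    obtain f where f1: "f holomorphic_on G" and f2: "continuous_on (closure (G)) f"
      and f3: "(f \<longlongrightarrow> 0) at_infinity" and fr: "\<forall>k\<in>{1..m}. \<forall>s\<in>{0..2*pi}. A k s * f (\<eta> k s) = Ahat z0 \<eta> A k s * fh (zeta z0 \<eta> k s)"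
      using P2[OF h1 h2] by blast
    have rel: "\<forall>k\<in>{1..m}. \<forall>s\<in>{0..2*pi}. \<gamma> k s = Re (A k s * f (\<eta> k s))"
    proof (intro ballI)
      fix k s assume k: "k \<in> {1..m}" and s: "s \<in> {0..2*pi}"
      show "\<gamma> k s = Re (A k s * f (\<eta> k s))" by (simp only: bspec[OF bspec[OF fr k] s] bspec[OF bspec[OF hr k] s])
    qed
    show "\<gamma> \<in> Rplus m \<eta> G A" unfolding Rplus_def using H f1 f2 f3 rel by blast
  next
    fix \<gamma> assume "\<gamma> \<in> Rplus m \<eta> G A"
    then obtain f where H: "\<gamma> \<in> Hsp m" and f1: "f holomorphic_on G" and f2: "continuous_on (closure (G)) f"
      and f3: "(f \<longlongrightarrow> 0) at_infinity" and fr: "\<forall>k\<in>{1..m}. \<forall>s\<in>{0..2*pi}. \<gamma> k s = Re (A k s * f (\<eta> k s))"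
      unfolding Rplus_def by blast
    obtain fh where h1: "fh holomorphic_on Ghat z0 G" and h2: "continuous_on (closure (Ghat z0 G)) fh"
      and hr: "\<forall>k\<in>{1..m}. \<forall>s\<in>{0..2*pi}. A k s * f (\<eta> k s) = Ahat z0 \<eta> A k s * fh (zeta z0 \<eta> k s)"
      using P1[OF f1 f2 f3] by blast
    have rel: "\<forall>k\<in>{1..m}. \<forall>s\<in>{0..2*pi}. \<gamma> k s = Re (Ahat z0 \<eta> A k s * fh (zeta z0 \<eta> k s))"
    proof (intro ballI)
      fix k s assume k: "k \<in> {1..m}" and s: "s \<in> {0..2*pi}"
      show "\<gamma> k s = Re (Ahat z0 \<eta> A k s * fh (zeta z0 \<eta> k s))" by (simp only: bspec[OF bspec[OF fr k] s] bspec[OF bspec[OF hr k] s])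
    qed
    show "\<gamma> \<in> Rplus_hat z0 m \<eta> G A" unfolding Rplus_hat_def using H h1 h2 rel by blast
  qed
  have e2: "Splus_hat z0 m \<eta> G A = Splus m \<eta> G A"
  proof (intro set_eqI iffI)
    fix \<gamma> assume "\<gamma> \<in> Splus_hat z0 m \<eta> G A"
    then obtain fh where H: "\<gamma> \<in> Hsp m" and h1: "fh holomorphic_on Ghat z0 G" and h2: "continuous_on (closure (Ghat z0 G)) fh"
      and hr: "\<forall>k\<in>{1..m}. \<forall>s\<in>{0..2*pi}. complex_of_real (\<gamma> k s) = Ahat z0 \<eta> A k s * fh (zeta z0 \<eta> k s)"
      unfolding Splus_hat_def by blast
    obtain f where f1: "f holomorphic_on G" and f2: "continuous_on (closure (G)) f"
      and f3: "(f \<longlongrightarrow> 0) at_infinity" and fr: "\<forall>k\<in>{1..m}. \<forall>s\<in>{0..2*pi}. A k s * f (\<eta> k s) = Ahat z0 \<eta> A k s * fh (zeta z0 \<eta> k s)"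
      using P2[OF h1 h2] by blast
    have rel: "\<forall>k\<in>{1..m}. \<forall>s\<in>{0..2*pi}. complex_of_real (\<gamma> k s) = A k s * f (\<eta> k s)"
    proof (intro ballI)
      fix k s assume k: "k \<in> {1..m}" and s: "s \<in> {0..2*pi}"
      show "complex_of_real (\<gamma> k s) = A k s * f (\<eta> k s)" by (simp only: bspec[OF bspec[OF fr k] s] bspec[OF bspec[OF hr k] s])
    qed
    show "\<gamma> \<in> Splus m \<eta> G A" unfolding Splus_def using H f1 f2 f3 rel by blast
  next
    fix \<gamma> assume "\<gamma> \<in> Splus m \<eta> G A"
    then obtain f where H: "\<gamma> \<in> Hsp m" and f1: "f holomorphic_on G" and f2: "continuous_on (closure (G)) f"
      and f3: "(f \<longlongrightarrow> 0) at_infinity" and fr: "\<forall>k\<in>{1..m}. \<forall>s\<in>{0..2*pi}. complex_of_real (\<gamma> k s) = A k s * f (\<eta> k s)"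
      unfolding Splus_def by blast
    obtain fh where h1: "fh holomorphic_on Ghat z0 G" and h2: "continuous_on (closure (Ghat z0 G)) fh"
      and hr: "\<forall>k\<in>{1..m}. \<forall>s\<in>{0..2*pi}. A k s * f (\<eta> k s) = Ahat z0 \<eta> A k s * fh (zeta z0 \<eta> k s)"
      using P1[OF f1 f2 f3] by blast
    have rel: "\<forall>k\<in>{1..m}. \<forall>s\<in>{0..2*pi}. complex_of_real (\<gamma> k s) = Ahat z0 \<eta> A k s * fh (zeta z0 \<eta> k s)"
    proof (intro ballI)
      fix k s assume k: "k \<in> {1..m}" and s: "s \<in> {0..2*pi}"
      show "complex_of_real (\<gamma> k s) = Ahat z0 \<eta> A k s * fh (zeta z0 \<eta> k s)" by (simp only: bspec[OF bspec[OF fr k] s] bspec[OF bspec[OF hr k] s])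
    qed
    show "\<gamma> \<in> Splus_hat z0 m \<eta> G A" unfolding Splus_hat_def using H h1 h2 rel by blast
  qed
  have e3: "Rminus_hat z0 m \<eta> A = Rminus m \<eta> A"
  proof (intro set_eqI iffI)
    fix \<gamma> assume "\<gamma> \<in> Rminus_hat z0 m \<eta> A"
    then obtain fh where H: "\<gamma> \<in> Hsp m" and h1: "fh holomorphic_on Gminus_hat z0 m \<eta>" and h2: "continuous_on (closure (Gminus_hat z0 m \<eta>)) fh"
      and h3: "(fh \<longlongrightarrow> 0) at_infinity" and hr: "\<forall>k\<in>{1..m}. \<forall>s\<in>{0..2*pi}. \<gamma> k s = Re (Ahat z0 \<eta> A k s * fh (zeta z0 \<eta> k s))"
      unfolding Rminus_hat_def by blast
    obtain f where f1: "f holomorphic_on Gminus m \<eta>" and f2: "continuous_on (closure (Gminus m \<eta>)) f"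
      and fr: "\<forall>k\<in>{1..m}. \<forall>s\<in>{0..2*pi}. A k s * f (\<eta> k s) = Ahat z0 \<eta> A k s * fh (zeta z0 \<eta> k s)"
      using M2[OF h1 h2 h3] by blast
    have rel: "\<forall>k\<in>{1..m}. \<forall>s\<in>{0..2*pi}. \<gamma> k s = Re (A k s * f (\<eta> k s))"
    proof (intro ballI)
      fix k s assume k: "k \<in> {1..m}" and s: "s \<in> {0..2*pi}"
      show "\<gamma> k s = Re (A k s * f (\<eta> k s))" by (simp only: bspec[OF bspec[OF fr k] s] bspec[OF bspec[OF hr k] s])
    qed
    show "\<gamma> \<in> Rminus m \<eta> A" unfolding Rminus_def using H f1 f2 rel by blast
  next
    fix \<gamma> assume "\<gamma> \<in> Rminus m \<eta> A"
    then obtain f where H: "\<gamma> \<in> Hsp m" and f1: "f holomorphic_on Gminus m \<eta>" and f2: "continuous_on (closure (Gminus m \<eta>)) f"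
      and fr: "\<forall>k\<in>{1..m}. \<forall>s\<in>{0..2*pi}. \<gamma> k s = Re (A k s * f (\<eta> k s))"
      unfolding Rminus_def by blast
    obtain fh where h1: "fh holomorphic_on Gminus_hat z0 m \<eta>" and h2: "continuous_on (closure (Gminus_hat z0 m \<eta>)) fh"
      and h3: "(fh \<longlongrightarrow> 0) at_infinity" and hr: "\<forall>k\<in>{1..m}. \<forall>s\<in>{0..2*pi}. A k s * f (\<eta> k s) = Ahat z0 \<eta> A k s * fh (zeta z0 \<eta> k s)"
      using M1[OF f1 f2] by blast
    have rel: "\<forall>k\<in>{1..m}. \<forall>s\<in>{0..2*pi}. \<gamma> k s = Re (Ahat z0 \<eta> A k s * fh (zeta z0 \<eta> k s))"
    proof (intro ballI)
      fix k s assume k: "k \<in> {1..m}" and s: "s \<in> {0..2*pi}"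
      show "\<gamma> k s = Re (Ahat z0 \<eta> A k s * fh (zeta z0 \<eta> k s))" by (simp only: bspec[OF bspec[OF fr k] s] bspec[OF bspec[OF hr k] s])
    qed
    show "\<gamma> \<in> Rminus_hat z0 m \<eta> A" unfolding Rminus_hat_def using H h1 h2 h3 rel by blast
  qed
  have e4: "Sminus_hat z0 m \<eta> A = Sminus m \<eta> A"
  proof (intro set_eqI iffI)
    fix \<gamma> assume "\<gamma> \<in> Sminus_hat z0 m \<eta> A"
    then obtain fh where H: "\<gamma> \<in> Hsp m" and h1: "fh holomorphic_on Gminus_hat z0 m \<eta>" and h2: "continuous_on (closure (Gminus_hat z0 m \<eta>)) fh"
      and h3: "(fh \<longlongrightarrow> 0) at_infinity" and hr: "\<forall>k\<in>{1..m}. \<forall>s\<in>{0..2*pi}. complex_of_real (\<gamma> k s) = Ahat z0 \<eta> A k s * fh (zeta z0 \<eta> k s)"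
      unfolding Sminus_hat_def by blast
    obtain f where f1: "f holomorphic_on Gminus m \<eta>" and f2: "continuous_on (closure (Gminus m \<eta>)) f"
      and fr: "\<forall>k\<in>{1..m}. \<forall>s\<in>{0..2*pi}. A k s * f (\<eta> k s) = Ahat z0 \<eta> A k s * fh (zeta z0 \<eta> k s)"
      using M2[OF h1 h2 h3] by blast
    have rel: "\<forall>k\<in>{1..m}. \<forall>s\<in>{0..2*pi}. complex_of_real (\<gamma> k s) = A k s * f (\<eta> k s)"
    proof (intro ballI)
      fix k s assume k: "k \<in> {1..m}" and s: "s \<in> {0..2*pi}"
      show "complex_of_real (\<gamma> k s) = A k s * f (\<eta> k s)" by (simp only: bspec[OF bspec[OF fr k] s] bspec[OF bspec[OF hr k] s])
    qed
    show "\<gamma> \<in> Sminus m \<eta> A" unfolding Sminus_def using H f1 f2 rel by blast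
  next
    fix \<gamma> assume "\<gamma> \<in> Sminus m \<eta> A"
    then obtain f where H: "\<gamma> \<in> Hsp m" and f1: "f holomorphic_on Gminus m \<eta>" and f2: "continuous_on (closure (Gminus m \<eta>)) f"
      and fr: "\<forall>k\<in>{1..m}. \<forall>s\<in>{0..2*pi}. complex_of_real (\<gamma> k s) = A k s * f (\<eta> k s)"
      unfolding Sminus_def by blast
    obtain fh where h1: "fh holomorphic_on Gminus_hat z0 m \<eta>" and h2: "continuous_on (closure (Gminus_hat z0 m \<eta>)) fh"
      and h3: "(fh \<longlongrightarrow> 0) at_infinity" and hr: "\<forall>k\<in>{1..m}. \<forall>s\<in>{0..2*pi}. A k s * f (\<eta> k s) = Ahat z0 \<eta> A k s * fh (zeta z0 \<eta> k s)"
      using M1[OF f1 f2] by blast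
    have rel: "\<forall>k\<in>{1..m}. \<forall>s\<in>{0..2*pi}. complex_of_real (\<gamma> k s) = Ahat z0 \<eta> A k s * fh (zeta z0 \<eta> k s)"
    proof (intro ballI)
      fix k s assume k: "k \<in> {1..m}" and s: "s \<in> {0..2*pi}"
      show "complex_of_real (\<gamma> k s) = Ahat z0 \<eta> A k s * fh (zeta z0 \<eta> k s)" by (simp only: bspec[OF bspec[OF fr k] s] bspec[OF bspec[OF hr k] s])
    qed
    show "\<gamma> \<in> Sminus_hat z0 m \<eta> A" unfolding Sminus_hat_def using H h1 h2 h3 rel by blast
  qed
  show ?thesis using e1 e2 e3 e4 by blast
qed

end
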